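(* Let $t$ be a positive integer and $w$ an integer with $\lceil (t+1)/2\rceil\le w\le t$. Then $$ma_t(w)\ge \frac{w}{2t}+\frac{\lfloor (t-1)/2\rfloor}{2t}.$$
   Context: A voter matrix with $t$ topics is a matrix $V\in\{Y,N\}^{n\times t}$ for some positive integer $n$ (rows are voters), subject to the standing assumption that in every column the number of entries $Y$ is at least the number of entries $N$. $\mathcal{V}_t$ is the set of all voter matrices with $t$ topics and any number of voters. A proposal is a vector $p\in\{Y,N\}^t$. A voter $v$ supports $p$ if the Hamming distance between $v$ and $p$ is at most $t/2$; $p$ is supported by $V$ if at least $n/2$ rows of $V$ support $p$. $md_V$ is the maximum number of entries $Y$ of a proposal supported by $V$. $m_V$ denotes the fraction of entries $Y$ among all $nt$ entries of $V$. For an integer $w$ with $\lceil (t+1)/2\rceil\le w\le t$, $ma_t(w)$ is the supremum of $m_V$ over all $V\in\mathcal{V}_t$ with $md_V<w$, with the convention that $ma_t(w)=\frac12$ if no such $V$ exists. *)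

theory Defs
  imports Complex_Main
begin

text \<open>A voter matrix with t topics and n voters is represented by V :: nat => nat => bool,
  V i j = True meaning entry Y for voter i (i < n) and topic j (j < t); only entries with
  i < n, j < t are relevant. A proposal is p :: nat => bool (only j < t relevant).\<close>

definition voter_matrix :: "nat \<Rightarrow> nat \<Rightarrow> (nat \<Rightarrow> nat \<Rightarrow> bool) \<Rightarrow> bool" where
  "voter_matrix t n V \<longleftrightarrow> 0 < n \<and>
     (\<forall>j<t. card {i. i < n \<and> \<not> V i j} \<le> card {i. i < n \<and> V i j})"

definition hamming :: "nat \<Rightarrow> (nat \<Rightarrow> bool) \<Rightarrow> (nat \<Rightarrow> bool) \<Rightarrow> nat" where
  "hamming t v p = card {j. j < t \<and> v j \<noteq> p j}"

definition supports :: "nat \<Rightarrow> (nat \<Rightarrow> bool) \<Rightarrow> (nat \<Rightarrow> bool) \<Rightarrow> bool" where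
  "supports t v p \<longleftrightarrow> real (hamming t v p) \<le> real t / 2"

definition supported :: "nat \<Rightarrow> nat \<Rightarrow> (nat \<Rightarrow> nat \<Rightarrow> bool) \<Rightarrow> (nat \<Rightarrow> bool) \<Rightarrow> bool" where
  "supported t n V p \<longleftrightarrow> real (card {i. i < n \<and> supports t (V i) p}) \<ge> real n / 2"

definition num_yes :: "nat \<Rightarrow> (nat \<Rightarrow> bool) \<Rightarrow> nat" where
  "num_yes t p = card {j. j < t \<and> p j}"

definition md :: "nat \<Rightarrow> nat \<Rightarrow> (nat \<Rightarrow> nat \<Rightarrow> bool) \<Rightarrow> nat" where
  "md t n V = Max {num_yes t p | p. supported t n V p}"

definition mfrac :: "nat \<Rightarrow> nat \<Rightarrow> (nat \<Rightarrow> nat \<Rightarrow> bool) \<Rightarrow> real" where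
  "mfrac t n V = real (card {(i, j). i < n \<and> j < t \<and> V i j}) / (real n * real t)"

definition ma :: "nat \<Rightarrow> nat \<Rightarrow> real" where
  "ma t w = (let S = {mfrac t n V | n V. voter_matrix t n V \<and> md t n V < w}
             in if S = {} then 1/2 else Sup S)"

end

theory Submission
  imports Defs
begin
lemma pairs_fin: "finite {(i, j). i < (n::nat) \<and> j < (t::nat) \<and> V i j}"
  by (rule finite_subset[of _ "{..<n} \<times> {..<t}"]) (auto intro: finite_cartesian_product)

lemma mfrac_le1: "mfrac t n V \<le> 1"
proof -
  have "card {(i, j). i < n \<and> j < t \<and> V i j} \<le> card ({..<n} \<times> {..<t})"
    by (rule card_mono) auto
  hence c: "real (card {(i, j). i < n \<and> j < t \<and> V i j}) \<le> real n * real t"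
    by (simp add: card_cartesian_product flip: of_nat_mult)
  show ?thesis
  proof (cases "real n * real t = 0")
    case False
    hence "real n * real t > 0" by (simp add: zero_less_mult_iff)
    thus ?thesis using c unfolding mfrac_def by (simp add: divide_le_eq)
  qed (auto simp add: mfrac_def)
qed

lemma mfrac_ge_half:
  assumes "voter_matrix t n V" "0 < t"
  shows "mfrac t n V \<ge> 1/2"
proof -
  have n: "0 < n" using assms unfolding voter_matrix_def by auto
  have col: "2 * card {i. i < n \<and> V i j} \<ge> n" if "j < t" for j
  proof -
    have "{i. i < n \<and> V i j} \<union> {i. i < n \<and> \<not> V i j} = {..<n}" by auto
    moreover have "card ({i. i < n \<and> V i j} \<union> {i. i < n \<and> \<not> V i j})
       = card {i. i < n \<and> V i j} + card {i. i < n \<and> \<not> V i j}"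
      by (rule card_Un_disjoint) auto
    moreover have "card {i. i < n \<and> \<not> V i j} \<le> card {i. i < n \<and> V i j}"
      using assms that unfolding voter_matrix_def by auto
    ultimately show ?thesis by simp
  qed
  have eq: "{(i, j). i < n \<and> j < t \<and> V i j} = (\<lambda>(j,i). (i,j)) ` (SIGMA j:{..<t}. {i. i < n \<and> V i j})"
    by auto
  have "card {(i, j). i < n \<and> j < t \<and> V i j} = card (SIGMA j:{..<t}. {i. i < n \<and> V i j})"
    unfolding eq by (rule card_image) (auto simp: inj_on_def)
  also have "\<dots> = (\<Sum>j<t. card {i. i < n \<and> V i j})" by (rule card_SigmaI) auto
  finally have ce: "card {(i, j). i < n \<and> j < t \<and> V i j} = (\<Sum>j<t. card {i. i < n \<and> V i j})" .
  have "(\<Sum>j<t. n) \<le> (\<Sum>j<t. 2 * card {i. i < n \<and> V i j})"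
    by (rule sum_mono) (use col in auto)
  hence "t * n \<le> 2 * card {(i, j). i < n \<and> j < t \<and> V i j}"
    unfolding ce by (simp add: sum_distrib_left)
  hence "real t * real n \<le> 2 * real (card {(i, j). i < n \<and> j < t \<and> V i j})"
    by (metis of_nat_le_iff of_nat_mult of_nat_numeral)
  moreover have "real n * real t > 0" using n assms by simp
  ultimately show ?thesis unfolding mfrac_def by (simp add: le_divide_eq mult.commute)
qed

lemma ny_le: "num_yes t p \<le> num_yes t v + hamming t v p"
proof -
  have "{j. j < t \<and> p j} \<subseteq> {j. j < t \<and> v j} \<union> {j. j < t \<and> v j \<noteq> p j}" by auto
  hence "num_yes t p \<le> card ({j. j < t \<and> v j} \<union> {j. j < t \<and> v j \<noteq> p j})"
    unfolding num_yes_def by (rule card_mono[rotated]) auto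
  also have "\<dots> \<le> num_yes t v + hamming t v p"
    unfolding num_yes_def hamming_def by (rule card_Un_le)
  finally show ?thesis .
qed

lemma ny_le_t: "num_yes t p \<le> t"
  unfolding num_yes_def by (rule order.trans[OF card_mono[of "{..<t}"]]) auto

lemma supp_le: "supports t v p \<Longrightarrow> hamming t v p \<le> t div 2"
  unfolding supports_def by linarith

lemma constr:
  assumes t: "0 < t" "t \<le> m" and a: "1 \<le> a" "a \<le> t" and aw: "a + t div 2 < w" and wt: "w \<le> t"
  defines "V \<equiv> \<lambda>i j. if i \<le> m then (if i < t then j = i else j < a) else True"
  shows "voter_matrix t (2*m+1) V" "md t (2*m+1) V < w"
    "mfrac t (2*m+1) V \<ge> real (m*t + (m+1-t)*a) / (real (2*m+1) * real t)"
proof -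
  show "voter_matrix t (2*m+1) V" unfolding voter_matrix_def
  proof (intro conjI allI impI)
    fix j assume j: "j < t"
    have "card {i. i < 2*m+1 \<and> \<not> V i j} \<le> card ({..m} - {j})"
      by (rule card_mono) (use j in \<open>auto simp: V_def split: if_splits\<close>)
    also have "\<dots> = m" using j t by simp
    also have "m \<le> card (insert j {m+1..<2*m+1})" using j t by simp
    also have "\<dots> \<le> card {i. i < 2*m+1 \<and> V i j}"
      by (rule card_mono) (use j t in \<open>auto simp: V_def\<close>)
    finally show "card {i. i < 2*m+1 \<and> \<not> V i j} \<le> card {i. i < 2*m+1 \<and> V i j}" .
  qed simp
  have bad: "num_yes t (V i) \<le> a" if "i \<le> m" for i
  proof (cases "i < t")
    case True
    have "num_yes t (V i) \<le> card {i}" unfolding num_yes_def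
      by (rule card_mono) (use that True in \<open>auto simp: V_def\<close>)
    thus ?thesis using a by simp
  next
    case False
    have "num_yes t (V i) \<le> card {..<a}" unfolding num_yes_def
      by (rule card_mono) (use that False in \<open>auto simp: V_def\<close>)
    thus ?thesis by simp
  qed
  let ?P = "{num_yes t p | p. supported t (2*m+1) V p}"
  have fin: "finite ?P" by (rule finite_subset[of _ "{..t}"]) (auto simp: ny_le_t)
  have "supported t (2*m+1) V (\<lambda>_. False)"
  proof -
    have "{..m} \<subseteq> {i. i < 2*m+1 \<and> supports t (V i) (\<lambda>_. False)}"
    proof
      fix i assume i: "i \<in> {..m}"
      have "hamming t (V i) (\<lambda>_. False) = num_yes t (V i)"
        unfolding hamming_def num_yes_def by simp
      also have "\<dots> \<le> a" using bad i by simp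
      finally have "hamming t (V i) (\<lambda>_. False) \<le> t div 2" using aw wt by linarith
      hence "real (hamming t (V i) (\<lambda>_. False)) \<le> real t / 2" by linarith
      thus "i \<in> {i. i < 2*m+1 \<and> supports t (V i) (\<lambda>_. False)}"
        using i by (simp add: supports_def)
    qed
    hence "card {..m} \<le> card {i. i < 2*m+1 \<and> supports t (V i) (\<lambda>_. False)}"
      by (rule card_mono[rotated]) auto
    thus ?thesis unfolding supported_def by simp
  qed
  hence ne: "?P \<noteq> {}" by blast
  have lt: "x < w" if "x \<in> ?P" for x
  proof -
    obtain p where p: "x = num_yes t p" "supported t (2*m+1) V p" using \<open>x \<in> ?P\<close> by blast
    have "\<exists>i\<le>m. supports t (V i) p"
    proof (rule ccontr)
      assume "\<not> ?thesis"
      hence "{i. i < 2*m+1 \<and> supports t (V i) p} \<subseteq> {m+1..<2*m+1}" using not_less_eq_eq by auto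
      hence "card {i. i < 2*m+1 \<and> supports t (V i) p} \<le> m"
        using card_mono[of "{m+1..<2*m+1}"] by fastforce
      hence "real (card {i. i < 2*m+1 \<and> supports t (V i) p}) \<le> real m" by linarith
      thus False using p(2) unfolding supported_def by simp
    qed
    then obtain i where "i \<le> m" "supports t (V i) p" by blast
    hence "num_yes t (V i) \<le> a" "hamming t (V i) p \<le> t div 2" using bad supp_le by auto
    thus ?thesis using ny_le[of t p "V i"] p(1) aw by linarith
  qed
  show "md t (2*m+1) V < w" unfolding md_def
    using fin ne lt by (simp add: Max_less_iff)
  have sub: "{m+1..<2*m+1} \<times> {..<t} \<union> {t..m} \<times> {..<a} \<subseteq> {(i, j). i < 2*m+1 \<and> j < t \<and> V i j}"
    using a by (auto simp: V_def)
  have "m*t + (m+1-t)*a = card ({m+1..<2*m+1} \<times> {..<t} \<union> {t..m} \<times> {..<a})"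
    by (subst card_Un_disjoint) (auto simp: card_cartesian_product)
  also have "\<dots> \<le> card {(i, j). i < 2*m+1 \<and> j < t \<and> V i j}"
    by (rule card_mono[OF pairs_fin sub])
  finally have "real (m*t + (m+1-t)*a) \<le> real (card {(i, j). i < 2*m+1 \<and> j < t \<and> V i j})"
    by linarith
  moreover have "real (2*m+1) * real t > 0" using t by simp
  ultimately show "mfrac t (2*m+1) V \<ge> real (m*t + (m+1-t)*a) / (real (2*m+1) * real t)"
    unfolding mfrac_def by (simp add: divide_right_mono)
qed

lemma fraclem:
  fixes t D A B :: real
  assumes "t > 0" "D > 0"
  shows "A / (2*t) - B / (D*t) = (A*D - 2*B) / (2*t*D)"
  using assms by (simp add: field_simps)

lemma fraclem2:
  fixes t D :: real
  assumes "t > 0" "D > 0"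
  shows "(t + 2*t*t) / (2*t*D) = (1 + 2*t) / (2*D)"
  using assms by (simp add: field_simps)

lemma approx:
  fixes t m a :: nat
  assumes "0 < t" "t \<le> m" "a \<le> t" "0 < m"
  shows "real (m*t + (m+1-t)*a) / (real (2*m+1) * real t) \<ge> (real a + real t) / (2 * real t) - (1 + 2 * real t) / real m"
proof -
  have e: "real (m*t + (m+1-t)*a) = real m * real t + (real m + 1 - real t) * real a"
    using assms by (simp add: of_nat_diff)
  have tp: "real t > 0" "real m > 0" using assms by auto
  have r: "real (2*m+1) = 2 * real m + 1" by simp
  have dp: "2 * real m + 1 > 0" using tp by simp
  have "(real a + real t) / (2 * real t) - real (m*t + (m+1-t)*a) / (real (2*m+1) * real t)
      = (real t + 2 * real t * real a - real a) / (2 * real t * (2 * real m + 1))"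
    unfolding e r fraclem[OF tp(1) dp] by (simp add: algebra_simps)
  also have "\<dots> \<le> (real t + 2 * real t * real t) / (2 * real t * (2 * real m + 1))"
  proof (rule divide_right_mono)
    have "real a \<le> real t" using assms by simp
    hence "2 * real t * real a \<le> 2 * real t * real t" using tp by (intro mult_left_mono) auto
    thus "real t + 2 * real t * real a - real a \<le> real t + 2 * real t * real t" by simp
  qed (use tp in simp)
  also have "\<dots> = (1 + 2 * real t) / (2 * (2 * real m + 1))"
    by (rule fraclem2[OF tp(1) dp])
  also have "\<dots> \<le> (1 + 2 * real t) / real m"
    using tp by (intro divide_left_mono) auto
  finally show ?thesis by linarith
qed

theorem lemma5p9:
  fixes t w :: nat
  assumes "0 < t"
    and "\<lceil>(real t + 1) / 2\<rceil> \<le> int w"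
    and "w \<le> t"
  shows "ma t w \<ge> real w / (2 * real t) + real_of_int \<lfloor>(real t - 1) / 2\<rfloor> / (2 * real t)"
proof -
  define k where "k = t div 2"
  have par: "t = 2*k \<or> t = 2*k+1" unfolding k_def by linarith
  hence par': "real t = 2*real k \<or> real t = 2*real k+1" by auto
  have c: "\<lceil>(real t + 1) / 2\<rceil> = int k + 1"
    by (rule ceiling_unique) (use par' in auto)
  have f: "\<lfloor>(real t - 1) / 2\<rfloor> = int t - 1 - int k"
    by (rule floor_unique) (use par' par assms(1) in auto)
  have wk: "k + 1 \<le> w" using assms(2) c by linarith
  define a where "a = w - 1 - k"
  have aw: "w = a + k + 1" using wk a_def by simp
  have rhs: "real w / (2 * real t) + real_of_int \<lfloor>(real t - 1) / 2\<rfloor> / (2 * real t)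
      = (real a + real t) / (2 * real t)"
    unfolding f aw using assms(1) wk by (simp add: field_simps k_def)
  define S where "S = {mfrac t n V | n V. voter_matrix t n V \<and> md t n V < w}"
  have ma: "ma t w = (if S = {} then 1/2 else Sup S)" unfolding ma_def S_def by simp
  have bdd: "bdd_above S" unfolding S_def by (rule bdd_aboveI[of _ 1]) (auto simp: mfrac_le1)
  show ?thesis unfolding rhs
  proof (cases "a = 0")
    case True
    have "1/2 \<le> ma t w"
    proof (cases "S = {}")
      case False
      then obtain x where x: "x \<in> S" by blast
      then have "1/2 \<le> x" unfolding S_def using mfrac_ge_half assms(1) by auto
      also have "x \<le> Sup S" by (rule cSup_upper[OF x bdd])
      finally show ?thesis using ma False by simp
    qed (simp add: ma)
    thus "(real a + real t) / (2 * real t) \<le> ma t w" using True assms(1) by simp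
  next
    case False
    hence a1: "1 \<le> a" by simp
    have at: "a \<le> t" "a + t div 2 < w" using aw assms(3) k_def by auto
    have mem: "\<exists>x\<in>S. x \<ge> (real a + real t) / (2 * real t) - (1 + 2 * real t) / real m"
      if "t \<le> m" for m
    proof -
      define V where "V \<equiv> \<lambda>i j. if i \<le> m then (if i < t then j = i else j < a) else True"
      note cc = constr[OF assms(1) that a1 at assms(3), folded V_def]
      have "mfrac t (2*m+1) V \<in> S" unfolding S_def using cc(1,2) by blast
      moreover have "mfrac t (2*m+1) V \<ge> (real a + real t) / (2 * real t) - (1 + 2 * real t) / real m"
        using cc(3) approx[OF assms(1) that at(1)] assms(1) that by linarith
      ultimately show ?thesis by blast
    qed
    have ne: "S \<noteq> {}" using mem[of t] by auto
    have "(real a + real t) / (2 * real t) \<le> Sup S"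
    proof (rule ccontr)
      assume nt: "\<not> (real a + real t) / (2 * real t) \<le> Sup S"
      define d where "d = (real a + real t) / (2 * real t) - Sup S"
      have d: "d > 0" using nt d_def by simp
      obtain n :: nat where n: "(1 + 2 * real t) / d < real n" using reals_Archimedean2 by blast
      define m where "m = max t n"
      have mpos: "real m > 0" using assms(1) m_def by simp
      have "(1 + 2 * real t) / d < real m" using n m_def by (simp add: less_max_iff_disj)
      hence "(1 + 2 * real t) < d * real m" using d by (simp add: divide_less_eq mult.commute)
      hence lt: "(1 + 2 * real t) / real m < d" using mpos by (simp add: divide_less_eq)
      obtain x where "x \<in> S" "x \<ge> (real a + real t) / (2 * real t) - (1 + 2 * real t) / real m"
        using mem[of m] m_def by auto
      moreover have "x \<le> Sup S" by (rule cSup_upper[OF \<open>x \<in> S\<close> bdd])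
      ultimately show False using lt d_def by linarith
    qed
    thus "(real a + real t) / (2 * real t) \<le> ma t w" using ma ne by simp
  qed
qed

end
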